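(* Let $\mathbb K$ be a field with $2\in\mathbb K^\times$, $A$ a unital commutative associative $\mathbb K$-algebra, $\mathfrak k$ a $\mathbb K$-Lie algebra, $\mathfrak g=A\otimes\mathfrak k$ and $\mathfrak z$ a vector space. For $i\in\{1,2,3\}$ and a linear map $f_i$ on the $i$-th summand, $f=f_i\circ p_i$ is a 2-cocycle if and only if: ($i=1$) every $\tilde f_1(a,b)$ is an invariant symmetric bilinear map $\mathfrak k\times\mathfrak k\to\mathfrak z$, and the induced alternating map $A\times A\to\mathrm{Lin}(\mathfrak k\vee\mathfrak k',\mathfrak z)^{\mathfrak k}$, $(a,b)\mapsto\tilde f_1(a,b)|_{\mathfrak k\vee\mathfrak k'}$, is a cyclic 1-cocycle; ($i=2$) $\tilde f_2(A)\subseteq Z^2(\mathfrak k,\mathfrak z)$; ($i=3$) $\tilde f_3(c)(x,y)=0$ for all $c\in I_A$, $x\in\mathfrak k$, $y\in\mathfrak k'$.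
   Context: $\mathfrak g$ has bracket $[a\otimes x,a'\otimes x']=aa'\otimes[x,x']$, $ax=a\otimes x$, unit $\mathbf 1$, $\mathfrak k'=[\mathfrak k,\mathfrak k]$. $v\wedge w=\tfrac12(v\otimes w-w\otimes v)$, $v\vee w=\tfrac12(v\otimes w+w\otimes v)$. $I_A$ is the kernel of multiplication $S^2(A)\to A$. The $i$-th summands are $\Lambda^2(A)\otimes S^2(\mathfrak k)$, $A\otimes\Lambda^2(\mathfrak k)$, $I_A\otimes\Lambda^2(\mathfrak k)$, with projections $p_1(ax\wedge by)=a\wedge b\otimes x\vee y$, $p_2(ax\wedge by)=ab\otimes x\wedge y$, $p_3(ax\wedge by)=(a\vee b-ab\vee\mathbf 1)\otimes x\wedge y$ (together an isomorphism from $\Lambda^2(\mathfrak g)$ onto the direct sum). A 2-cocycle is a linear map on $\Lambda^2(\mathfrak g)$ vanishing on the span of $[u,v]\wedge w+[v,w]\wedge u+[w,u]\wedge v$. $\tilde f_1(a,b)(x,y)=f_1(a\wedge b\otimes x\vee y)$, $\tilde f_2(a)(x,y)=f_2(a\otimes x\wedge y)$, $\tilde f_3(c)(x,y)=f_3(c\otimes x\wedge y)$. Invariance: $\kappa([x,y],z)=\kappa(x,[y,z])$. $\mathfrak k\vee\mathfrak k'$ is the span of $x\vee y$, $x\in\mathfrak k$, $y\in\mathfrak k'$; $\mathrm{Lin}(\mathfrak k\vee\mathfrak k',\mathfrak z)^{\mathfrak k}$ the $\mathfrak k$-invariant linear maps on it. A cyclic 1-cocycle is an alternating bilinear $\phi$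 on $A$ with $\phi(a,bc)+\phi(b,ca)+\phi(c,ab)=0$. $Z^2(\mathfrak k,\mathfrak z)$ is the space of alternating bilinear $\eta:\mathfrak k\times\mathfrak k\to\mathfrak z$ with $\eta([x,y],z)+\eta([y,z],x)+\eta([z,x],y)=0$. *)

theory Defs
  imports Complex_Main
begin

definition bilin ::
  "('k::field \<Rightarrow> 'u::ab_group_add \<Rightarrow> 'u) \<Rightarrow> ('k \<Rightarrow> 'v::ab_group_add \<Rightarrow> 'v) \<Rightarrow> ('k \<Rightarrow> 'w::ab_group_add \<Rightarrow> 'w)
    \<Rightarrow> ('u \<Rightarrow> 'v \<Rightarrow> 'w) \<Rightarrow> bool" where
  "bilin s1 s2 s3 B \<longleftrightarrow> (\<forall>y. Vector_Spaces.linear s1 s3 (\<lambda>x. B x y)) \<and> (\<forall>x. Vector_Spaces.linear s2 s3 (\<lambda>y. B x y))"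

definition lie_algebra :: "('k::field \<Rightarrow> 'l::ab_group_add \<Rightarrow> 'l) \<Rightarrow> ('l \<Rightarrow> 'l \<Rightarrow> 'l) \<Rightarrow> bool" where
  "lie_algebra sL br \<longleftrightarrow> vector_space sL \<and> bilin sL sL sL br \<and> (\<forall>x. br x x = 0)
     \<and> (\<forall>x y z. br x (br y z) + br y (br z x) + br z (br x y) = 0)"

definition comm_algebra :: "('k::field \<Rightarrow> 'a::comm_ring_1 \<Rightarrow> 'a) \<Rightarrow> bool" where
  "comm_algebra sA \<longleftrightarrow> vector_space sA \<and> (\<forall>c a b. sA c (a * b) = sA c a * b)"

definition derived :: "('k::field \<Rightarrow> 'l::ab_group_add \<Rightarrow> 'l) \<Rightarrow> ('l \<Rightarrow> 'l \<Rightarrow> 'l) \<Rightarrow> 'l set" where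
  "derived sL br = module.span sL {br x y | x y. True}"

definition invariant :: "('l \<Rightarrow> 'l \<Rightarrow> 'l) \<Rightarrow> ('l \<Rightarrow> 'l \<Rightarrow> 'z) \<Rightarrow> bool" where
  "invariant br \<kappa> \<longleftrightarrow> (\<forall>x y z. \<kappa> (br x y) z = \<kappa> x (br y z))"

definition Z2 :: "('k::field \<Rightarrow> 'l::ab_group_add \<Rightarrow> 'l) \<Rightarrow> ('k \<Rightarrow> 'z::ab_group_add \<Rightarrow> 'z)
    \<Rightarrow> ('l \<Rightarrow> 'l \<Rightarrow> 'l) \<Rightarrow> ('l \<Rightarrow> 'l \<Rightarrow> 'z) set" where
  "Z2 sL sZ br = {\<eta>. bilin sL sL sZ \<eta> \<and> (\<forall>x. \<eta> x x = 0)
      \<and> (\<forall>x y z. \<eta> (br x y) z + \<eta> (br y z) x + \<eta> (br z x) y = 0)}"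

text \<open>A linear map f on \<Lambda>^2(g), g = A \<otimes> k, is determined by its values
  \<Omega> a x b y = f(ax \<and> by) on generators.  f is a 2-cocycle iff it vanishes on
  [u,v]\<and>w + [v,w]\<and>u + [w,u]\<and>v; by trilinearity it suffices (and is necessary) to take
  u = ax, v = by, w = cz, where [ax,by] = (ab)[x,y].\<close>
definition is_2cocycle_gen :: "('l \<Rightarrow> 'l \<Rightarrow> 'l) \<Rightarrow> ('a::comm_ring_1 \<Rightarrow> 'l \<Rightarrow> 'a \<Rightarrow> 'l \<Rightarrow> 'z::ab_group_add) \<Rightarrow> bool" where
  "is_2cocycle_gen br \<Omega> \<longleftrightarrow>
     (\<forall>a b c x y z. \<Omega> (a * b) (br x y) c z + \<Omega> (b * c) (br y z) a x + \<Omega> (c * a) (br z x) b y = 0)"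

text \<open>f_1 : \<Lambda>^2(A) \<otimes> S^2(k) \<rightarrow> z, encoded by F1 a b x y = f_1(a\<and>b \<otimes> x\<or>y) = ~f_1(a,b)(x,y).\<close>
definition summand1_map :: "('k::field \<Rightarrow> 'a::comm_ring_1 \<Rightarrow> 'a) \<Rightarrow> ('k \<Rightarrow> 'l::ab_group_add \<Rightarrow> 'l) \<Rightarrow> ('k \<Rightarrow> 'z::ab_group_add \<Rightarrow> 'z) \<Rightarrow> ('a \<Rightarrow> 'a \<Rightarrow> 'l \<Rightarrow> 'l \<Rightarrow> 'z) \<Rightarrow> bool" where
  "summand1_map sA sL sZ (F1 :: 'a::comm_ring_1 \<Rightarrow> 'a \<Rightarrow> 'l::ab_group_add \<Rightarrow> 'l \<Rightarrow> 'z::ab_group_add) \<longleftrightarrow>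
     (\<forall>x y. bilin sA sA sZ (\<lambda>a b. F1 a b x y)) \<and> (\<forall>a b. bilin sL sL sZ (F1 a b))
     \<and> (\<forall>a x y. F1 a a x y = 0) \<and> (\<forall>a b x y. F1 a b x y = F1 a b y x)"

text \<open>f_2 : A \<otimes> \<Lambda>^2(k) \<rightarrow> z, encoded by F2 a x y = f_2(a \<otimes> x\<and>y) = ~f_2(a)(x,y).\<close>
definition summand2_map :: "('k::field \<Rightarrow> 'a::comm_ring_1 \<Rightarrow> 'a) \<Rightarrow> ('k \<Rightarrow> 'l::ab_group_add \<Rightarrow> 'l) \<Rightarrow> ('k \<Rightarrow> 'z::ab_group_add \<Rightarrow> 'z) \<Rightarrow> ('a \<Rightarrow> 'l \<Rightarrow> 'l \<Rightarrow> 'z) \<Rightarrow> bool" where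
  "summand2_map sA sL sZ (F2 :: 'a::comm_ring_1 \<Rightarrow> 'l::ab_group_add \<Rightarrow> 'l \<Rightarrow> 'z::ab_group_add) \<longleftrightarrow>
     (\<forall>x y. Vector_Spaces.linear sA sZ (\<lambda>a. F2 a x y)) \<and> (\<forall>a. bilin sL sL sZ (F2 a))
     \<and> (\<forall>a x. F2 a x x = 0)"

text \<open>f_3 : I_A \<otimes> \<Lambda>^2(k) \<rightarrow> z, encoded through an (always existing) linear extension
  to S^2(A) \<otimes> \<Lambda>^2(k), given by G a b x y = f_3(a\<or>b \<otimes> x\<and>y).\<close>
definition summand3_ext :: "('k::field \<Rightarrow> 'a::comm_ring_1 \<Rightarrow> 'a) \<Rightarrow> ('k \<Rightarrow> 'l::ab_group_add \<Rightarrow> 'l) \<Rightarrow> ('k \<Rightarrow> 'z::ab_group_add \<Rightarrow> 'z) \<Rightarrow> ('a \<Rightarrow> 'a \<Rightarrow> 'l \<Rightarrow> 'l \<Rightarrow> 'z) \<Rightarrow> bool" where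
  "summand3_ext sA sL sZ (G :: 'a::comm_ring_1 \<Rightarrow> 'a \<Rightarrow> 'l::ab_group_add \<Rightarrow> 'l \<Rightarrow> 'z::ab_group_add) \<longleftrightarrow>
     (\<forall>x y. bilin sA sA sZ (\<lambda>a b. G a b x y)) \<and> (\<forall>a b. bilin sL sL sZ (G a b))
     \<and> (\<forall>a b x y. G a b x y = G b a x y) \<and> (\<forall>a b x. G a b x x = 0)"

end

theory Submission
  imports Defs
begin


lemma lin_add: "Vector_Spaces.linear s1 s2 f \<Longrightarrow> f (x + y) = f x + f y"
  by (simp add: Vector_Spaces.linear_iff)

lemma lin_neg: "Vector_Spaces.linear s1 s2 f \<Longrightarrow> f (- x) = - f x"
proof -
  assume "Vector_Spaces.linear s1 s2 f"
  then interpret additive f by unfold_locales (simp add: Vector_Spaces.linear_iff)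
  show ?thesis by (rule minus)
qed

lemma lin_zero: "Vector_Spaces.linear s1 s2 f \<Longrightarrow> f 0 = 0"
proof -
  assume "Vector_Spaces.linear s1 s2 f"
  then interpret additive f by unfold_locales (simp add: Vector_Spaces.linear_iff)
  show ?thesis by (rule zero)
qed

lemma lin_span:
  assumes f: "Vector_Spaces.linear s1 s2 f" and S: "\<forall>x\<in>S. f x = 0" and y: "y \<in> module.span s1 S"
  shows "f y = 0"
proof -
  have vs1: "vector_space s1" and vs2: "vector_space s2" using f by (auto simp: Vector_Spaces.linear_iff)
  interpret v1: vector_space s1 by fact
  interpret v2: vector_space s2 by fact
  from y show ?thesis
  proof (induct rule: v1.span_induct_alt)
    case base then show ?case using lin_zero[OF f] .
  next
    case (step c x y)
    then show ?case using f S by (simp add: Vector_Spaces.linear_iff)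
  qed
qed

lemma half_zero:
  fixes sZ :: "'k::field \<Rightarrow> 'z::ab_group_add \<Rightarrow> 'z"
  assumes Z: "vector_space sZ" and two: "(2::'k) \<noteq> 0" and v: "v + v = (0::'z)"
  shows "v = 0"
proof -
  interpret vector_space sZ by fact
  have "sZ (2::'k) v = 0" using v by (metis one_add_one scale_left_distrib scale_one)
  then show ?thesis using two by auto
qed

lemma bilin_alt:
  assumes B: "bilin s1 s1 s3 B" and alt: "\<And>a. B a a = 0"
  shows "B b a = - B a b"
proof -
  have l1: "\<And>y. Vector_Spaces.linear s1 s3 (\<lambda>x. B x y)" and l2: "\<And>x. Vector_Spaces.linear s1 s3 (\<lambda>y. B x y)"
    using B by (auto simp: bilin_def)
  have "0 = B (a + b) (a + b)" using alt by simp
  also have "\<dots> = B a a + B a b + (B b a + B b b)"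
    using lin_add[OF l1] lin_add[OF l2] by (simp add: add.assoc)
  finally show ?thesis using alt by (simp add: eq_neg_iff_add_eq_0 add.commute)
qed

lemma lin_plus: "Vector_Spaces.linear s1 s2 f \<Longrightarrow> Vector_Spaces.linear s1 s2 g \<Longrightarrow> Vector_Spaces.linear s1 s2 (\<lambda>x. f x + g x)"
proof -
  assume f: "Vector_Spaces.linear s1 s2 f" and g: "Vector_Spaces.linear s1 s2 g"
  then have "vector_space s2" by (simp add: Vector_Spaces.linear_iff)
  then interpret vector_space s2 .
  show ?thesis using f g by (simp add: Vector_Spaces.linear_iff scale_right_distrib algebra_simps)
qed

lemma lin_minus: "Vector_Spaces.linear s1 s2 f \<Longrightarrow> Vector_Spaces.linear s1 s2 g \<Longrightarrow> Vector_Spaces.linear s1 s2 (\<lambda>x. f x - g x)"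
proof -
  assume f: "Vector_Spaces.linear s1 s2 f" and g: "Vector_Spaces.linear s1 s2 g"
  then have "vector_space s2" by (simp add: Vector_Spaces.linear_iff)
  then interpret vector_space s2 .
  show ?thesis using f g by (simp add: Vector_Spaces.linear_iff scale_right_diff_distrib algebra_simps)
qed

lemma derived_base:
  assumes L: "lie_algebra sL br" shows "br x y \<in> derived sL br"
proof -
  have "vector_space sL" using L by (simp add: lie_algebra_def)
  then interpret vector_space sL .
  show ?thesis unfolding derived_def by (rule span_base) auto
qed

lemma part2:
  fixes F2 :: "'a::comm_ring_1 \<Rightarrow> 'l::ab_group_add \<Rightarrow> 'l \<Rightarrow> 'z::ab_group_add"
  assumes S: "summand2_map sA sL sZ F2"
  shows "is_2cocycle_gen br (\<lambda>a x b y. F2 (a * b) x y) \<longleftrightarrow> (\<forall>a. F2 a \<in> Z2 sL sZ br)"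
proof
  assume C: "is_2cocycle_gen br (\<lambda>a x b y. F2 (a * b) x y)"
  show "\<forall>a. F2 a \<in> Z2 sL sZ br"
  proof
    fix a
    have "F2 a (br x y) z + F2 a (br y z) x + F2 a (br z x) y = 0" for x y z
      using C[unfolded is_2cocycle_gen_def, rule_format, of a 1 1 x y z] by simp
    then show "F2 a \<in> Z2 sL sZ br" using S by (simp add: Z2_def summand2_map_def)
  qed
next
  assume Z: "\<forall>a. F2 a \<in> Z2 sL sZ br"
  show "is_2cocycle_gen br (\<lambda>a x b y. F2 (a * b) x y)"
    unfolding is_2cocycle_gen_def
  proof (intro allI)
    fix a b c :: 'a and x y z
    have e1: "b * c * a = a * b * c" "c * a * b = a * b * c" by (simp_all add: ac_simps)
    show "F2 (a * b * c) (br x y) z + F2 (b * c * a) (br y z) x + F2 (c * a * b) (br z x) y = 0"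
      unfolding e1 using Z by (simp add: Z2_def)
  qed
qed

lemma part3:
  fixes sA :: "'k::field \<Rightarrow> 'a::comm_ring_1 \<Rightarrow> 'a"
    and sL :: "'k \<Rightarrow> 'l::ab_group_add \<Rightarrow> 'l"
    and sZ :: "'k \<Rightarrow> 'z::ab_group_add \<Rightarrow> 'z"
    and br :: "'l \<Rightarrow> 'l \<Rightarrow> 'l"
    and G :: "'a \<Rightarrow> 'a \<Rightarrow> 'l \<Rightarrow> 'l \<Rightarrow> 'z"
  assumes two: "(2::'k) \<noteq> 0"
    and L: "lie_algebra sL br"
    and Z: "vector_space sZ"
    and S: "summand3_ext sA sL sZ G"
  shows "is_2cocycle_gen br (\<lambda>a x b y. G a b x y - G (a * b) 1 x y) \<longleftrightarrow>
          (\<forall>ps :: ('a \<times> 'a) list. (\<Sum>(a, b)\<leftarrow>ps. a * b) = 0 \<longrightarrow>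
             (\<forall>x y. y \<in> derived sL br \<longrightarrow> (\<Sum>(a, b)\<leftarrow>ps. G a b x y) = 0))"
proof -
  have linA: "Vector_Spaces.linear sA sZ (\<lambda>a. G a b x y)" for a b x y
    using S by (simp add: summand3_ext_def bilin_def)
  have linL1: "Vector_Spaces.linear sL sZ (\<lambda>x. G a b x y)" for a b y
    using S by (simp add: summand3_ext_def bilin_def)
  have linL2: "Vector_Spaces.linear sL sZ (\<lambda>y. G a b x y)" for a b x
    using S by (simp add: summand3_ext_def bilin_def)
  have symA: "G a b x y = G b a x y" for a b x y using S by (simp add: summand3_ext_def)
  have altL: "G a b y x = - G a b x y" for a b x y
    by (rule bilin_alt[of sL sZ "G a b"]) (use S in \<open>simp_all add: summand3_ext_def\<close>)
  show ?thesis
  proof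
    assume C0: "is_2cocycle_gen br (\<lambda>a x b y. G a b x y - G (a * b) 1 x y)"
    have C: "(G (a * b) c (br x y) z - G (a * b * c) 1 (br x y) z) +
             (G (b * c) a (br y z) x - G (b * c * a) 1 (br y z) x) +
             (G (c * a) b (br z x) y - G (c * a * b) 1 (br z x) y) = 0" for a b c x y z
      using C0 unfolding is_2cocycle_gen_def by blast
    define K where "K a c x y = G a c x y - G (a * c) 1 x y" for a c x y
    have P: "K a c (br x y) z + K a c (br y z) x = 0" for a c x y z
    proof -
      have "K a c (br x y) z + K c a (br y z) x + K (c * a) 1 (br z x) y = 0"
        using C[of a 1 c x y z] unfolding K_def by simp
      moreover have "K c a = K a c" unfolding K_def by (intro ext) (simp add: symA mult.commute)
      moreover have "K (c * a) 1 u v = 0" for u v unfolding K_def by simp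
      ultimately show ?thesis by simp
    qed
    have K0: "K a c (br x y) z = 0" for a c x y z
    proof (rule half_zero[OF Z two])
      have "K a c (br x y) z + K a c (br x y) z =
         (K a c (br x y) z + K a c (br y z) x) - (K a c (br y z) x + K a c (br z x) y)
          + (K a c (br z x) y + K a c (br x y) z)" by (simp add: algebra_simps)
      then show "K a c (br x y) z + K a c (br x y) z = 0" using P by simp
    qed
    have Kd: "G a c x y = G (a * c) 1 x y" if y: "y \<in> derived sL br" for a c x y
    proof -
      have "(\<lambda>y. G a c x y - G (a * c) 1 x y) y = 0"
      proof (rule lin_span[OF lin_minus[OF linL2 linL2] _ y[unfolded derived_def]])
        show "\<forall>w\<in>{br x y |x y. True}. G a c x w - G (a * c) 1 x w = 0"
        proof safe
          fix u v
          have "G a c x (br u v) - G (a * c) 1 x (br u v) = - K a c (br u v) x"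
            unfolding K_def by (simp add: altL[of _ _ x])
          then show "G a c x (br u v) - G (a * c) 1 x (br u v) = 0" using K0 by simp
        qed
      qed
      then show ?thesis by simp
    qed
    have G0: "G 0 1 x y = 0" for x y using lin_zero[OF linA] .
    show "\<forall>ps :: ('a \<times> 'a) list. (\<Sum>(a, b)\<leftarrow>ps. a * b) = 0 \<longrightarrow>
             (\<forall>x y. y \<in> derived sL br \<longrightarrow> (\<Sum>(a, b)\<leftarrow>ps. G a b x y) = 0)"
    proof (intro allI impI)
      fix ps :: "('a \<times> 'a) list" and x y
      assume s: "(\<Sum>(a, b)\<leftarrow>ps. a * b) = 0" and y: "y \<in> derived sL br"
      have "(\<Sum>(a, b)\<leftarrow>ps. G a b x y) = G (\<Sum>(a, b)\<leftarrow>ps. a * b) 1 x y"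
      proof (induction ps)
        case Nil then show ?case using G0 by simp
      next
        case (Cons p ps)
        obtain a b where p: "p = (a, b)" by fastforce
        show ?case using Cons.IH Kd[OF y, of a b] lin_add[OF linA]
          by (simp add: p)
      qed
      then show "(\<Sum>(a, b)\<leftarrow>ps. G a b x y) = 0" using s G0 by simp
    qed
  next
    assume R: "\<forall>ps :: ('a \<times> 'a) list. (\<Sum>(a, b)\<leftarrow>ps. a * b) = 0 \<longrightarrow>
             (\<forall>x y. y \<in> derived sL br \<longrightarrow> (\<Sum>(a, b)\<leftarrow>ps. G a b x y) = 0)"
    have Kd: "G a c x y = G (a * c) 1 x y" if y: "y \<in> derived sL br" for a c x y
    proof -
      have "(\<Sum>(a, b)\<leftarrow>[(a, c), (- (a * c), 1)]. a * b) = 0" by simp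
      then have "(\<Sum>(a, b)\<leftarrow>[(a, c), (- (a * c), 1)]. G a b x y) = 0" using R y by blast
      then show ?thesis using lin_neg[OF linA, of "a * c" 1 x y] by simp
    qed
    have T: "G u v (br x y) z - G (u * v) 1 (br x y) z = 0" for u v x y z
      using Kd[OF derived_base[OF L], of u v z x y] altL[of _ _ z "br x y"] by simp
    show "is_2cocycle_gen br (\<lambda>a x b y. G a b x y - G (a * b) 1 x y)"
      unfolding is_2cocycle_gen_def using T by simp
  qed
qed

lemma part1:
  fixes sA :: "'k::field \<Rightarrow> 'a::comm_ring_1 \<Rightarrow> 'a"
    and sL :: "'k \<Rightarrow> 'l::ab_group_add \<Rightarrow> 'l"
    and sZ :: "'k \<Rightarrow> 'z::ab_group_add \<Rightarrow> 'z"
    and br :: "'l \<Rightarrow> 'l \<Rightarrow> 'l"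
    and F :: "'a \<Rightarrow> 'a \<Rightarrow> 'l \<Rightarrow> 'l \<Rightarrow> 'z"
  assumes two: "(2::'k) \<noteq> 0"
    and L: "lie_algebra sL br"
    and Z: "vector_space sZ"
    and S: "summand1_map sA sL sZ F"
  shows "is_2cocycle_gen br (\<lambda>a x b y. F a b x y) \<longleftrightarrow>
          (\<forall>a b. bilin sL sL sZ (F a b) \<and> (\<forall>x y. F a b x y = F a b y x) \<and> invariant br (F a b))
        \<and> (\<forall>a b c x y. y \<in> derived sL br \<longrightarrow>
              F a (b * c) x y + F b (c * a) x y + F c (a * b) x y = 0)"
proof -
  have linL1: "Vector_Spaces.linear sL sZ (\<lambda>x. F a b x y)" for a b y
    using S by (simp add: summand1_map_def bilin_def)
  have linL2: "Vector_Spaces.linear sL sZ (\<lambda>y. F a b x y)" for a b x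
    using S by (simp add: summand1_map_def bilin_def)
  have bil: "bilin sL sL sZ (F a b)" for a b using S by (simp add: summand1_map_def)
  have symL: "F a b x y = F a b y x" for a b x y using S by (simp add: summand1_map_def)
  have antiA: "F b a x y = - F a b x y" for a b x y
    by (rule bilin_alt[of sA sZ "\<lambda>a b. F a b x y"]) (use S in \<open>simp_all add: summand1_map_def\<close>)
  have negx: "F a b (- u) w = - F a b u w" for a b u w using lin_neg[OF linL1] .
  have brneg: "br y x = - br x y" for x y
    by (rule bilin_alt[of sL sL br]) (use L in \<open>simp_all add: lie_algebra_def\<close>)
  show ?thesis
  proof
    assume C0: "is_2cocycle_gen br (\<lambda>a x b y. F a b x y)"
    have C: "F (a * b) c (br x y) z + F (b * c) a (br y z) x + F (c * a) b (br z x) y = 0" for a b c x y z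
      using C0 unfolding is_2cocycle_gen_def by blast
    have D: "F a b (br z x) y = F a b (br y z) x" for a b x y z
    proof -
      have E1: "F (a * b) 1 (br x y) z - F a b (br y z) x + F a b (br z x) y = 0"
        using C[of a b 1 x y z] antiA[of b a] by simp
      have E2: "F (a * b) 1 (br y x) z + F b a (br x z) y + F a b (br z y) x = 0"
        using C[of a b 1 y x z] by simp
      have E2': "- F (a * b) 1 (br x y) z + F a b (br z x) y - F a b (br y z) x = 0"
      proof -
        have "F (a * b) 1 (br y x) z = - F (a * b) 1 (br x y) z" by (simp add: brneg[of y x] negx)
        moreover have "F b a (br x z) y = F a b (br z x) y" by (simp add: brneg[of x z] negx antiA[of b a])
        moreover have "F a b (br z y) x = - F a b (br y z) x" by (simp add: brneg[of z y] negx)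
        ultimately show ?thesis using E2 by simp
      qed
      have "(F a b (br z x) y - F a b (br y z) x) + (F a b (br z x) y - F a b (br y z) x) = 0"
      proof -
        have "(F a b (br z x) y - F a b (br y z) x) + (F a b (br z x) y - F a b (br y z) x)
           = (F (a * b) 1 (br x y) z - F a b (br y z) x + F a b (br z x) y)
             + (- F (a * b) 1 (br x y) z + F a b (br z x) y - F a b (br y z) x)"
          by (simp add: algebra_simps) 
        also have "\<dots> = 0 + 0" by (simp only: E1 E2')
        finally show ?thesis by simp
      qed
      then have "F a b (br z x) y - F a b (br y z) x = 0" by (rule half_zero[OF Z two])
      then show ?thesis by simp
    qed
    have inv: "invariant br (F a b)" for a b
      unfolding invariant_def
    proof (intro allI)
      fix u v w
      have "F a b (br u v) w = F a b (br w u) v" by (rule D)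
      also have "\<dots> = F a b (br v w) u" by (rule D)
      also have "\<dots> = F a b u (br v w)" by (rule symL)
      finally show "F a b (br u v) w = F a b u (br v w)" .
    qed
    have cyc: "F a (b * c) x y + F b (c * a) x y + F c (a * b) x y = 0"
      if y: "y \<in> derived sL br" for a b c x y
    proof -
      have "(\<lambda>y. F a (b * c) x y + F b (c * a) x y + F c (a * b) x y) y = 0"
      proof (rule lin_span[OF lin_plus[OF lin_plus[OF linL2 linL2] linL2] _ y[unfolded derived_def]])
        show "\<forall>w\<in>{br x y |x y. True}. F a (b * c) x w + F b (c * a) x w + F c (a * b) x w = 0"
        proof safe
          fix u v
          have c: "F (a * b) c (br u v) x + F (b * c) a (br v x) u + F (c * a) b (br x u) v = 0"
            by (rule C)
          have d1: "F (b * c) a (br v x) u = F (b * c) a (br u v) x" by (rule D)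
          have d2: "F (c * a) b (br x u) v = F (c * a) b (br u v) x"
            using D[of "c * a" b x u v] D[of "c * a" b v x u] by simp
          have "F a (b * c) x (br u v) + F b (c * a) x (br u v) + F c (a * b) x (br u v)
             = - (F (a * b) c (br u v) x + F (b * c) a (br v x) u + F (c * a) b (br x u) v)"
            unfolding d1 d2 by (simp add: symL[of _ _ x] antiA[of "b * c"] antiA[of "c * a"] antiA[of "a * b"])
          then show "F a (b * c) x (br u v) + F b (c * a) x (br u v) + F c (a * b) x (br u v) = 0"
            using c by simp
        qed
      qed
      then show ?thesis by simp
    qed
    show "(\<forall>a b. bilin sL sL sZ (F a b) \<and> (\<forall>x y. F a b x y = F a b y x) \<and> invariant br (F a b))
        \<and> (\<forall>a b c x y. y \<in> derived sL br \<longrightarrow>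
              F a (b * c) x y + F b (c * a) x y + F c (a * b) x y = 0)"
      using bil symL inv cyc by blast
  next
    assume R: "(\<forall>a b. bilin sL sL sZ (F a b) \<and> (\<forall>x y. F a b x y = F a b y x) \<and> invariant br (F a b))
        \<and> (\<forall>a b c x y. y \<in> derived sL br \<longrightarrow>
              F a (b * c) x y + F b (c * a) x y + F c (a * b) x y = 0)"
    have inv: "F a b (br x y) z = F a b x (br y z)" for a b x y z
      using R unfolding invariant_def by blast
    have D': "F a b (br y z) x = F a b (br x y) z" for a b x y z
    proof -
      have "F a b (br y z) x = F a b y (br z x)" by (rule inv)
      also have "\<dots> = F a b (br z x) y" by (rule symL)
      also have "\<dots> = F a b z (br x y)" by (rule inv)
      also have "\<dots> = F a b (br x y) z" by (rule symL)
      finally show ?thesis .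
    qed
    show "is_2cocycle_gen br (\<lambda>a x b y. F a b x y)"
      unfolding is_2cocycle_gen_def
    proof (intro allI)
      fix a b c :: 'a and x y z :: 'l
      have c: "F a (b * c) z (br x y) + F b (c * a) z (br x y) + F c (a * b) z (br x y) = 0"
        using R derived_base[OF L] by blast
      have d2: "F (c * a) b (br z x) y = F (c * a) b (br x y) z"
        using D'[of "c * a" b y z x] D'[of "c * a" b z x y] by simp
      have d1: "F (b * c) a (br y z) x = F (b * c) a (br x y) z" by (rule D')
      have "F (a * b) c (br x y) z + F (b * c) a (br y z) x + F (c * a) b (br z x) y
          = - (F a (b * c) z (br x y) + F b (c * a) z (br x y) + F c (a * b) z (br x y))"
        unfolding d2 d1
        by (simp add: symL[of _ _ _ z] antiA[of _ "b * c"] antiA[of _ "c * a"] antiA[of _ "a * b"])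
      then show "F (a * b) c (br x y) z + F (b * c) a (br y z) x + F (c * a) b (br z x) y = 0"
        using c by simp
    qed
  qed
qed



theorem corollary3p3:
  fixes sA :: "'k::field \<Rightarrow> 'a::comm_ring_1 \<Rightarrow> 'a"
    and sL :: "'k \<Rightarrow> 'l::ab_group_add \<Rightarrow> 'l"
    and sZ :: "'k \<Rightarrow> 'z::ab_group_add \<Rightarrow> 'z"
    and br :: "'l \<Rightarrow> 'l \<Rightarrow> 'l"
  assumes two: "(2::'k) \<noteq> 0"
    and A: "comm_algebra sA"
    and L: "lie_algebra sL br"
    and Z: "vector_space sZ"
  shows
   "(\<forall>F1. summand1_map sA sL sZ F1 \<longrightarrow>
       (is_2cocycle_gen br (\<lambda>a x b y. F1 a b x y) \<longleftrightarrow>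
          (\<forall>a b. bilin sL sL sZ (F1 a b) \<and> (\<forall>x y. F1 a b x y = F1 a b y x) \<and> invariant br (F1 a b))
        \<and> (\<forall>a b c x y. y \<in> derived sL br \<longrightarrow>
              F1 a (b * c) x y + F1 b (c * a) x y + F1 c (a * b) x y = 0)))
  \<and> (\<forall>F2. summand2_map sA sL sZ F2 \<longrightarrow>
       (is_2cocycle_gen br (\<lambda>a x b y. F2 (a * b) x y) \<longleftrightarrow>
          (\<forall>a. F2 a \<in> Z2 sL sZ br)))
  \<and> (\<forall>G. summand3_ext sA sL sZ G \<longrightarrow>
       (is_2cocycle_gen br (\<lambda>a x b y. G a b x y - G (a * b) 1 x y) \<longleftrightarrow>
          (\<forall>ps :: ('a \<times> 'a) list. (\<Sum>(a, b)\<leftarrow>ps. a * b) = 0 \<longrightarrow>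
             (\<forall>x y. y \<in> derived sL br \<longrightarrow> (\<Sum>(a, b)\<leftarrow>ps. G a b x y) = 0))))"
  proof (intro conjI allI impI)
  fix F1 assume "summand1_map sA sL sZ F1"
  then show "is_2cocycle_gen br (\<lambda>a x b y. F1 a b x y) \<longleftrightarrow>
          (\<forall>a b. bilin sL sL sZ (F1 a b) \<and> (\<forall>x y. F1 a b x y = F1 a b y x) \<and> invariant br (F1 a b))
        \<and> (\<forall>a b c x y. y \<in> derived sL br \<longrightarrow>
              F1 a (b * c) x y + F1 b (c * a) x y + F1 c (a * b) x y = 0)"
    by (rule part1[OF two L Z])
next
  fix F2 assume "summand2_map sA sL sZ F2"
  then show "is_2cocycle_gen br (\<lambda>a x b y. F2 (a * b) x y) \<longleftrightarrow> (\<forall>a. F2 a \<in> Z2 sL sZ br)"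
    by (rule part2)
next
  fix G assume "summand3_ext sA sL sZ G"
  then show "is_2cocycle_gen br (\<lambda>a x b y. G a b x y - G (a * b) 1 x y) \<longleftrightarrow>
          (\<forall>ps :: ('a \<times> 'a) list. (\<Sum>(a, b)\<leftarrow>ps. a * b) = 0 \<longrightarrow>
             (\<forall>x y. y \<in> derived sL br \<longrightarrow> (\<Sum>(a, b)\<leftarrow>ps. G a b x y) = 0))"
    by (rule part3[OF two L Z])
qed

end
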